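(* Let $L\subseteq Q$ be a dense extension of symmetric Leibniz algebras with $\mathrm{ran}(Q)=\mathrm{lan}(Q)=\{0\}$. Suppose that $\mathscr{A}(Q)$ is strong right ideally absorbed into $\mathscr{A}_0$. Then $Q$ is an algebra of quotients of $L$.
   Context: A symmetric Leibniz algebra satisfies both $[x,[y,z]]=[[x,y],z]-[[x,z],y]$ and $[x,[y,z]]=[[x,y],z]+[y,[x,z]]$. $\mathrm{lan}(Q)=\{x\in Q:[x,Q]=0\}$, $\mathrm{ran}(Q)=\{x\in Q:[Q,x]=0\}$. For $x\in Q$, $R_x(u)=[u,x]$, $L_x(u)=[x,u]$. $M(Q)$ is the associative subalgebra of $\mathrm{End}(Q)$ generated by the identity and all $R_x,L_x$; $L$ is dense in $Q$ if the only $\mu\in M(Q)$ with $\mu(L)=\{0\}$ is $\mu=0$. $\mathscr{A}(Q)$ is the associative subalgebra of $\mathrm{End}(Q)$ generated by all $R_x,L_x$ ($x\in Q$), and $\mathscr{A}_0=\{\mu\in\mathscr{A}(Q):\mu(L)\subseteq L\}$. For an associative algebra $S$ with subalgebra $A$, $S$ is strong right ideally absorbed into $A$ if for any $p,q\in S\setminus\{0\}$ there is a two-sided ideal $I$ of $A$ with $\mathrm{lan}_A(I)=\{a\in A: aI=0\}=\{0\}$ such that $pI\ne\{0\}$ or $qI\ne\{0\}$, and both $pI\subseteq A$, $qI\subseteq A$. With $\mathscr{A}_Q(L)$ the associative algebra generated by $R_x,L_y$ ($x,y\in L$), ${}_L(q)=\mathbb{F}q+\{\sum\xi_i(q):\xi_i\in\mathscr{A}_Q(L)\}$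 and $(L:q)=\{x\in L:[x,{}_L(q)]\subseteq L,[{}_L(q),x]\subseteq L\}$; $Q$ is an algebra of quotients of $L$ if for all $p,q\in Q$, $p\ne0$, there is $x\in(L:q)$ with $[x,p]\ne0$ or $y\in(L:q)$ with $[p,y]\ne0$. *)

theory Defs
  imports Complex_Main
begin

definition bilinear_bracket :: "('f::field \<Rightarrow> 'q::ab_group_add \<Rightarrow> 'q) \<Rightarrow> ('q \<Rightarrow> 'q \<Rightarrow> 'q) \<Rightarrow> bool" where
  "bilinear_bracket scale br \<longleftrightarrow>
     (\<forall>x y z. br (x + y) z = br x z + br y z) \<and>
     (\<forall>x y z. br x (y + z) = br x y + br x z) \<and>
     (\<forall>c x y. br (scale c x) y = scale c (br x y)) \<and>
     (\<forall>c x y. br x (scale c y) = scale c (br x y))"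

definition symmetric_leibniz_algebra ::
  "('f::field \<Rightarrow> 'q::ab_group_add \<Rightarrow> 'q) \<Rightarrow> ('q \<Rightarrow> 'q \<Rightarrow> 'q) \<Rightarrow> bool" where
  "symmetric_leibniz_algebra scale br \<longleftrightarrow>
     vector_space scale \<and> bilinear_bracket scale br \<and>
     (\<forall>x y z. br x (br y z) = br (br x y) z - br (br x z) y) \<and>
     (\<forall>x y z. br x (br y z) = br (br x y) z + br y (br x z))"

definition lan_alg :: "('q::zero \<Rightarrow> 'q \<Rightarrow> 'q) \<Rightarrow> 'q set" where
  "lan_alg br = {x. \<forall>y. br x y = 0}"

definition ran_alg :: "('q::zero \<Rightarrow> 'q \<Rightarrow> 'q) \<Rightarrow> 'q set" where
  "ran_alg br = {x. \<forall>y. br y x = 0}"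

definition subalgebra ::
  "('f::field \<Rightarrow> 'q::ab_group_add \<Rightarrow> 'q) \<Rightarrow> ('q \<Rightarrow> 'q \<Rightarrow> 'q) \<Rightarrow> 'q set \<Rightarrow> bool" where
  "subalgebra scale br L \<longleftrightarrow>
     0 \<in> L \<and> (\<forall>x\<in>L. \<forall>y\<in>L. x + y \<in> L) \<and> (\<forall>c. \<forall>x\<in>L. scale c x \<in> L) \<and>
     (\<forall>x\<in>L. \<forall>y\<in>L. br x y \<in> L)"

definition Rmult :: "('q \<Rightarrow> 'q \<Rightarrow> 'q) \<Rightarrow> 'q \<Rightarrow> 'q \<Rightarrow> 'q" where
  "Rmult br x = (\<lambda>u. br u x)"

definition Lmult :: "('q \<Rightarrow> 'q \<Rightarrow> 'q) \<Rightarrow> 'q \<Rightarrow> 'q \<Rightarrow> 'q" where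
  "Lmult br x = (\<lambda>u. br x u)"

text \<open>Associative subalgebra of End(Q) (product = composition) generated by the
  operators R_x, L_y with x in X, y in Y, optionally together with the identity.\<close>
inductive_set gen_alg ::
  "('f::field \<Rightarrow> 'q::ab_group_add \<Rightarrow> 'q) \<Rightarrow> ('q \<Rightarrow> 'q \<Rightarrow> 'q) \<Rightarrow> bool \<Rightarrow> 'q set \<Rightarrow> 'q set
     \<Rightarrow> ('q \<Rightarrow> 'q) set"
  for scale br withid X Y where
  gen_id: "withid \<Longrightarrow> id \<in> gen_alg scale br withid X Y"
| gen_R: "x \<in> X \<Longrightarrow> Rmult br x \<in> gen_alg scale br withid X Y"
| gen_L: "y \<in> Y \<Longrightarrow> Lmult br y \<in> gen_alg scale br withid X Y"
| gen_zero: "(\<lambda>u. 0) \<in> gen_alg scale br withid X Y"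
| gen_add: "\<mu> \<in> gen_alg scale br withid X Y \<Longrightarrow> \<nu> \<in> gen_alg scale br withid X Y
     \<Longrightarrow> (\<lambda>u. \<mu> u + \<nu> u) \<in> gen_alg scale br withid X Y"
| gen_scale: "\<mu> \<in> gen_alg scale br withid X Y
     \<Longrightarrow> (\<lambda>u. scale c (\<mu> u)) \<in> gen_alg scale br withid X Y"
| gen_comp: "\<mu> \<in> gen_alg scale br withid X Y \<Longrightarrow> \<nu> \<in> gen_alg scale br withid X Y
     \<Longrightarrow> \<mu> \<circ> \<nu> \<in> gen_alg scale br withid X Y"

definition multM where "multM scale br = gen_alg scale br True UNIV UNIV"

definition multA where "multA scale br = gen_alg scale br False UNIV UNIV"

definition multA0 where "multA0 scale br L = {\<mu> \<in> multA scale br. \<mu> ` L \<subseteq> L}"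

definition multAL where "multAL scale br L = gen_alg scale br False L L"

definition dense_in :: "('f::field \<Rightarrow> 'q::ab_group_add \<Rightarrow> 'q) \<Rightarrow> ('q \<Rightarrow> 'q \<Rightarrow> 'q) \<Rightarrow> 'q set \<Rightarrow> bool" where
  "dense_in scale br L \<longleftrightarrow>
     (\<forall>\<mu>\<in>multM scale br. (\<forall>x\<in>L. \<mu> x = 0) \<longrightarrow> \<mu> = (\<lambda>u. 0))"

definition two_sided_ideal ::
  "('f::field \<Rightarrow> 'q::ab_group_add \<Rightarrow> 'q) \<Rightarrow> ('q \<Rightarrow> 'q) set \<Rightarrow> ('q \<Rightarrow> 'q) set \<Rightarrow> bool" where
  "two_sided_ideal scale A I \<longleftrightarrow>
     I \<subseteq> A \<and> (\<lambda>u. 0) \<in> I \<and>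
     (\<forall>\<mu>\<in>I. \<forall>\<nu>\<in>I. (\<lambda>u. \<mu> u + \<nu> u) \<in> I) \<and>
     (\<forall>c. \<forall>\<mu>\<in>I. (\<lambda>u. scale c (\<mu> u)) \<in> I) \<and>
     (\<forall>a\<in>A. \<forall>\<mu>\<in>I. a \<circ> \<mu> \<in> I \<and> \<mu> \<circ> a \<in> I)"

definition lan_in :: "('q \<Rightarrow> 'q::zero) set \<Rightarrow> ('q \<Rightarrow> 'q) set \<Rightarrow> ('q \<Rightarrow> 'q) set" where
  "lan_in A I = {a \<in> A. \<forall>i\<in>I. a \<circ> i = (\<lambda>u. 0)}"

definition strong_right_ideally_absorbed ::
  "('f::field \<Rightarrow> 'q::ab_group_add \<Rightarrow> 'q) \<Rightarrow> ('q \<Rightarrow> 'q) set \<Rightarrow> ('q \<Rightarrow> 'q) set \<Rightarrow> bool" where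
  "strong_right_ideally_absorbed scale S A \<longleftrightarrow>
     (\<forall>p\<in>S. \<forall>q\<in>S. p \<noteq> (\<lambda>u. 0) \<longrightarrow> q \<noteq> (\<lambda>u. 0) \<longrightarrow>
        (\<exists>I. two_sided_ideal scale A I \<and> lan_in A I = {\<lambda>u. 0} \<and>
             ((\<exists>i\<in>I. p \<circ> i \<noteq> (\<lambda>u. 0)) \<or> (\<exists>i\<in>I. q \<circ> i \<noteq> (\<lambda>u. 0))) \<and>
             (\<forall>i\<in>I. p \<circ> i \<in> A) \<and> (\<forall>i\<in>I. q \<circ> i \<in> A)))"

definition idealL :: "('f::field \<Rightarrow> 'q::ab_group_add \<Rightarrow> 'q) \<Rightarrow> ('q \<Rightarrow> 'q \<Rightarrow> 'q) \<Rightarrow> 'q set \<Rightarrow> 'q \<Rightarrow> 'q set" where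
  "idealL scale br L q =
     {scale c q + sum_list (map (\<lambda>\<xi>. \<xi> q) xs) | c xs. set xs \<subseteq> multAL scale br L}"

definition colon :: "('f::field \<Rightarrow> 'q::ab_group_add \<Rightarrow> 'q) \<Rightarrow> ('q \<Rightarrow> 'q \<Rightarrow> 'q) \<Rightarrow> 'q set \<Rightarrow> 'q \<Rightarrow> 'q set" where
  "colon scale br L q =
     {x \<in> L. (\<forall>u\<in>idealL scale br L q. br x u \<in> L) \<and> (\<forall>u\<in>idealL scale br L q. br u x \<in> L)}"

definition algebra_of_quotients ::
  "('f::field \<Rightarrow> 'q::ab_group_add \<Rightarrow> 'q) \<Rightarrow> ('q \<Rightarrow> 'q \<Rightarrow> 'q) \<Rightarrow> 'q set \<Rightarrow> bool" where
  "algebra_of_quotients scale br L \<longleftrightarrow>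
     (\<forall>p q. p \<noteq> 0 \<longrightarrow>
        (\<exists>x\<in>colon scale br L q. br x p \<noteq> 0) \<or> (\<exists>y\<in>colon scale br L q. br p y \<noteq> 0))"

end

theory Submission
  imports Defs
begin

lemma genA_sub_M:
  "\<mu> \<in> gen_alg scale br False X Y \<Longrightarrow> \<mu> \<in> gen_alg scale br True X Y"
  by (induction rule: gen_alg.induct) (blast intro: gen_alg.intros)+

lemma genA_antisym:
  assumes bl: "bilinear_bracket scale br"
    and vs: "vector_space scale"
    and anti: "\<And>y x z. br y (br x z) = - br (br x z) y"
    and mu: "\<mu> \<in> gen_alg scale br False X Y"
  shows "\<forall>u v. br v (\<mu> u) = - br (\<mu> u) v"
  using mu
proof (induction rule: gen_alg.induct)
  case gen_id then show ?case by simp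
next
  case (gen_R x) then show ?case by (simp add: Rmult_def anti)
next
  case (gen_L y) then show ?case by (simp add: Lmult_def anti)
next
  case gen_zero
  have z1: "br v 0 = 0" for v
  proof -
    have "br v (0+0) = br v 0 + br v 0" using bl unfolding bilinear_bracket_def by blast
    then show ?thesis by simp
  qed
  have z2: "br 0 v = 0" for v
  proof -
    have "br (0+0) v = br 0 v + br 0 v" using bl unfolding bilinear_bracket_def by blast
    then show ?thesis by simp
  qed
  show ?case by (simp add: z1 z2)
next
  case (gen_add \<mu> \<nu>)
  then show ?case using bl unfolding bilinear_bracket_def by simp
next
  case (gen_scale \<mu> c)
  interpret vector_space scale by (rule vs)
  show ?case using gen_scale bl unfolding bilinear_bracket_def by simp
next
  case (gen_comp \<mu> \<nu>)
  then show ?case by simp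
qed

theorem proposition6p9:
  fixes scale :: "'f::field \<Rightarrow> 'q::ab_group_add \<Rightarrow> 'q"
    and br :: "'q \<Rightarrow> 'q \<Rightarrow> 'q"
    and L :: "'q set"
  assumes "symmetric_leibniz_algebra scale br"
    and "subalgebra scale br L"
    and "dense_in scale br L"
    and "ran_alg br = {0}" and "lan_alg br = {0}"
    and "strong_right_ideally_absorbed scale (multA scale br) (multA0 scale br L)"
  shows "algebra_of_quotients scale br L"
proof -
  have vs: "vector_space scale" and bl: "bilinear_bracket scale br"
    and id1: "\<And>x y z. br x (br y z) = br (br x y) z - br (br x z) y"
    and id2: "\<And>x y z. br x (br y z) = br (br x y) z + br y (br x z)"
    using assms(1) unfolding symmetric_leibniz_algebra_def by blast+
  interpret vector_space scale by (rule vs)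
  have addL: "\<And>x y z. br (x + y) z = br x z + br y z"
    and addR: "\<And>x y z. br x (y + z) = br x y + br x z"
    and scL: "\<And>c x y. br (scale c x) y = scale c (br x y)"
    and scR: "\<And>c x y. br x (scale c y) = scale c (br x y)"
    using bl unfolding bilinear_bracket_def by auto
  have z1: "br v 0 = 0" for v
  proof -
    have "br v (0+0) = br v 0 + br v 0" by (rule addR)
    then show ?thesis by simp
  qed
  have z2: "br 0 v = 0" for v
  proof -
    have "br (0+0) v = br 0 v + br 0 v" by (rule addL)
    then show ?thesis by simp
  qed
  have anti: "\<And>y x z. br y (br x z) = - br (br x z) y"
  proof -
    fix y x z
    have "br (br x y) z - br (br x z) y = br (br x y) z + br y (br x z)"
      using id1[of x y z] id2[of x y z] by simp
    then have "br y (br x z) + br (br x z) y = 0" by (simp add: algebra_simps)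
    then show "br y (br x z) = - br (br x z) y" by (simp add: eq_neg_iff_add_eq_0)
  qed
  have L0: "0 \<in> L" and Ladd: "\<And>x y. x \<in> L \<Longrightarrow> y \<in> L \<Longrightarrow> x + y \<in> L"
    and Lsc: "\<And>c x. x \<in> L \<Longrightarrow> scale c x \<in> L"
    and Lbr: "\<And>x y. x \<in> L \<Longrightarrow> y \<in> L \<Longrightarrow> br x y \<in> L"
    using assms(2) unfolding subalgebra_def by auto
  have Lneg: "\<And>x. x \<in> L \<Longrightarrow> - x \<in> L"
    using Lsc[of _ "-1"] by simp
  have Ldiff: "\<And>x y. x \<in> L \<Longrightarrow> y \<in> L \<Longrightarrow> x - y \<in> L"
  proof -
    fix x y :: 'q assume "x \<in> L" "y \<in> L"
    then have "x + - y \<in> L" by (intro Ladd Lneg)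
    then show "x - y \<in> L" by simp
  qed
  have ranE: "\<And>p. p \<noteq> 0 \<Longrightarrow> Rmult br p \<noteq> (\<lambda>u. 0)"
  proof
    fix p assume "p \<noteq> 0" "Rmult br p = (\<lambda>u. 0)"
    then have "\<forall>y. br y p = 0" unfolding Rmult_def by (metis)
    then have "p \<in> ran_alg br" unfolding ran_alg_def by simp
    with assms(4) \<open>p \<noteq> 0\<close> show False by simp
  qed
  have RA: "\<And>p. Rmult br p \<in> multA scale br"
    unfolding multA_def by (rule gen_R) simp
  have LA0: "\<And>a. a \<in> L \<Longrightarrow> Lmult br a \<in> multA0 scale br L"
  proof -
    fix a assume a: "a \<in> L"
    have "Lmult br a \<in> gen_alg scale br False UNIV UNIV" by (rule gen_L) simp
    moreover have "Lmult br a ` L \<subseteq> L" using Lbr a by (auto simp: Lmult_def)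
    ultimately show "Lmult br a \<in> multA0 scale br L" by (simp add: multA0_def multA_def)
  qed
  have RA0: "\<And>a. a \<in> L \<Longrightarrow> Rmult br a \<in> multA0 scale br L"
  proof -
    fix a assume a: "a \<in> L"
    have "Rmult br a \<in> gen_alg scale br False UNIV UNIV" by (rule gen_R) simp
    moreover have "Rmult br a ` L \<subseteq> L" using Lbr a by (auto simp: Rmult_def)
    ultimately show "Rmult br a \<in> multA0 scale br L" by (simp add: multA0_def multA_def)
  qed
  show ?thesis
    unfolding algebra_of_quotients_def
  proof (intro allI impI)
    fix p q :: 'q
    assume p0: "p \<noteq> 0"
    define q' where "q' = (if q = 0 then p else q)"
    have q'0: "q' \<noteq> 0" using p0 by (simp add: q'_def)
    let ?A = "multA scale br" and ?A0 = "multA0 scale br L"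
    note sra = assms(6)[unfolded strong_right_ideally_absorbed_def, rule_format]
    obtain I where I: "two_sided_ideal scale ?A0 I" "lan_in ?A0 I = {\<lambda>u. 0}"
      "(\<exists>i\<in>I. Rmult br p \<circ> i \<noteq> (\<lambda>u. 0)) \<or> (\<exists>i\<in>I. Rmult br q' \<circ> i \<noteq> (\<lambda>u. 0))"
      "\<forall>i\<in>I. Rmult br p \<circ> i \<in> ?A0"
      "\<forall>i\<in>I. Rmult br q' \<circ> i \<in> ?A0"
      using sra[OF RA RA ranE[OF p0] ranE[OF q'0]] by (elim exE conjE) blast
    obtain I1 where I1: "two_sided_ideal scale ?A0 I1" "lan_in ?A0 I1 = {\<lambda>u. 0}"
      "(\<exists>i\<in>I1. Rmult br p \<circ> i \<noteq> (\<lambda>u. 0)) \<or> (\<exists>i\<in>I1. Rmult br p \<circ> i \<noteq> (\<lambda>u. 0))"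
      "\<forall>i\<in>I1. Rmult br p \<circ> i \<in> ?A0"
      "\<forall>i\<in>I1. Rmult br p \<circ> i \<in> ?A0"
      using sra[OF RA RA ranE[OF p0] ranE[OF p0]] by (elim exE conjE) blast
    obtain i1 where i1: "i1 \<in> I1" "Rmult br p \<circ> i1 \<noteq> (\<lambda>u. 0)" using I1(3) by blast
    have i1A0: "i1 \<in> ?A0" using I1(1) i1(1) unfolding two_sided_ideal_def by blast
    have aA0: "Rmult br p \<circ> i1 \<in> ?A0" using I1(4) i1(1) by blast
    obtain i where i: "i \<in> I" "Rmult br p \<circ> i1 \<circ> i \<noteq> (\<lambda>u. 0)"
      using I(2) aA0 i1(2) unfolding lan_in_def by blast
    define j where "j = i1 \<circ> i"
    have jI: "j \<in> I" using I(1) i1A0 i(1) unfolding two_sided_ideal_def j_def by blast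
    have IA0: "\<And>k. k \<in> I \<Longrightarrow> k \<in> ?A0" using I(1) unfolding two_sided_ideal_def by blast
    have IA: "\<And>k. k \<in> I \<Longrightarrow> k \<in> gen_alg scale br False UNIV UNIV"
      using IA0 unfolding multA0_def multA_def by blast
    have Rj: "Rmult br p \<circ> j \<noteq> (\<lambda>u. 0)" using i(2) by (simp add: j_def comp_assoc)
    have RjM: "Rmult br p \<circ> j \<in> multM scale br"
      unfolding multM_def
      by (rule genA_sub_M, rule gen_comp, rule gen_R, simp, rule IA[OF jI])
    obtain y where y: "y \<in> L" "(Rmult br p \<circ> j) y \<noteq> 0"
      using assms(3) RjM Rj unfolding dense_in_def by blast
    define X where "X = {k u | k u. k \<in> I \<and> u \<in> L}"
    have XL: "\<And>x. x \<in> X \<Longrightarrow> x \<in> L"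
      using IA0 unfolding X_def multA0_def by blast
    have XLa: "\<And>x a. x \<in> X \<Longrightarrow> a \<in> L \<Longrightarrow> br a x \<in> X"
    proof -
      fix x a assume "x \<in> X" "a \<in> L"
      then obtain k u where "k \<in> I" "u \<in> L" "x = k u" unfolding X_def by blast
      then have "Lmult br a \<circ> k \<in> I" using I(1) LA0[OF \<open>a \<in> L\<close>]
        unfolding two_sided_ideal_def by blast
      moreover have "br a x = (Lmult br a \<circ> k) u" by (simp add: Lmult_def \<open>x = k u\<close>)
      ultimately show "br a x \<in> X" unfolding X_def using \<open>u \<in> L\<close> by blast
    qed
    have XRa: "\<And>x a. x \<in> X \<Longrightarrow> a \<in> L \<Longrightarrow> br x a \<in> X"
    proof -
      fix x a assume "x \<in> X" "a \<in> L"
      then obtain k u where "k \<in> I" "u \<in> L" "x = k u" unfolding X_def by blast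
      then have "Rmult br a \<circ> k \<in> I" using I(1) RA0[OF \<open>a \<in> L\<close>]
        unfolding two_sided_ideal_def by blast
      moreover have "br x a = (Rmult br a \<circ> k) u" by (simp add: Rmult_def \<open>x = k u\<close>)
      ultimately show "br x a \<in> X" unfolding X_def using \<open>u \<in> L\<close> by blast
    qed
    have Xq: "\<And>x. x \<in> X \<Longrightarrow> br x q \<in> L \<and> br q x \<in> L"
    proof -
      fix x assume "x \<in> X"
      then obtain k u where k: "k \<in> I" "u \<in> L" "x = k u" unfolding X_def by blast
      have xq: "br x q \<in> L"
      proof (cases "q = 0")
        case True then show ?thesis using z1 L0 by simp
      next
        case False
        then have "Rmult br q \<circ> k \<in> ?A0" using I(5) k(1) by (simp add: q'_def)
        then show ?thesis using k unfolding multA0_def by (auto simp: Rmult_def)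
      qed
      have "br q x = - br x q"
        using genA_antisym[OF bl vs anti IA[OF k(1)]] k(3) by blast
      then show "br x q \<in> L \<and> br q x \<in> L" using xq Lneg by simp
    qed
    define W where "W = {w. \<forall>x\<in>X. br x w \<in> L \<and> br w x \<in> L}"
    have qW: "q \<in> W" using Xq unfolding W_def by blast
    have W0: "0 \<in> W" unfolding W_def using z1 z2 L0 by simp
    have Wadd: "\<And>v w. v \<in> W \<Longrightarrow> w \<in> W \<Longrightarrow> v + w \<in> W"
      unfolding W_def using Ladd addL addR by simp
    have Wsc: "\<And>c w. w \<in> W \<Longrightarrow> scale c w \<in> W"
      unfolding W_def using Lsc scL scR by simp
    have WLa: "\<And>a w. a \<in> L \<Longrightarrow> w \<in> W \<Longrightarrow> br a w \<in> W"
    proof -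
      fix a w assume a: "a \<in> L" and w: "w \<in> W"
      show "br a w \<in> W" unfolding W_def
      proof (intro CollectI ballI)
        fix x assume x: "x \<in> X"
        have e1: "br x (br a w) = br (br x a) w + br a (br x w)" by (rule id2)
        have e2: "br (br a w) x = br a (br w x) + br (br a x) w"
          using id1[of a w x] by (simp add: algebra_simps)
        have "br (br x a) w \<in> L" using w XRa[OF x a] unfolding W_def by blast
        moreover have "br (br a x) w \<in> L" using w XLa[OF x a] unfolding W_def by blast
        moreover have "br x w \<in> L" "br w x \<in> L" using w x unfolding W_def by blast+
        ultimately show "br x (br a w) \<in> L \<and> br (br a w) x \<in> L"
          using e1 e2 Ladd Lbr a by simp
      qed
    qed
    have WRa: "\<And>a w. a \<in> L \<Longrightarrow> w \<in> W \<Longrightarrow> br w a \<in> W"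
    proof -
      fix a w assume a: "a \<in> L" and w: "w \<in> W"
      show "br w a \<in> W" unfolding W_def
      proof (intro CollectI ballI)
        fix x assume x: "x \<in> X"
        have e1: "br x (br w a) = br (br x w) a - br (br x a) w" by (rule id1)
        have e2: "br (br w a) x = br w (br a x) + br (br w x) a"
          using id1[of w a x] by (simp add: algebra_simps)
        have "br (br x a) w \<in> L" using w XRa[OF x a] unfolding W_def by blast
        moreover have "br w (br a x) \<in> L" using w XLa[OF x a] unfolding W_def by blast
        moreover have "br x w \<in> L" "br w x \<in> L" using w x unfolding W_def by blast+
        ultimately show "br x (br w a) \<in> L \<and> br (br w a) x \<in> L"
          using e1 e2 Ladd Ldiff Lbr a by simp
      qed
    qed
    have genW: "\<And>\<xi>. \<xi> \<in> gen_alg scale br False L L \<Longrightarrow> \<forall>w\<in>W. \<xi> w \<in> W"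
    proof -
      fix \<xi> assume "\<xi> \<in> gen_alg scale br False L L"
      then show "\<forall>w\<in>W. \<xi> w \<in> W"
        by (induction rule: gen_alg.induct)
          (auto simp: Rmult_def Lmult_def intro: WLa WRa W0 Wadd Wsc)
    qed
    have sumW: "set xs \<subseteq> multAL scale br L \<Longrightarrow> sum_list (map (\<lambda>\<xi>. \<xi> q) xs) \<in> W" for xs
    proof (induction xs)
      case Nil then show ?case using W0 by simp
    next
      case (Cons a xs)
      then show ?case using genW qW Wadd unfolding multAL_def by simp
    qed
    have idW: "idealL scale br L q \<subseteq> W"
      unfolding idealL_def using sumW Wadd Wsc qW by blast
    define x where "x = j y"
    have xX: "x \<in> X" unfolding X_def x_def using jI y(1) by blast
    have "x \<in> colon scale br L q"
      unfolding colon_def using XL[OF xX] idW xX unfolding W_def by blast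
    moreover have "br x p \<noteq> 0" using y(2) by (simp add: x_def Rmult_def)
    ultimately show "(\<exists>x\<in>colon scale br L q. br x p \<noteq> 0) \<or> (\<exists>y\<in>colon scale br L q. br p y \<noteq> 0)"
      by blast
  qed
qed

end
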